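(* Let $(H,R)$ be a semiquasitriangular Hopf algebra. For each $h\in H$, $(\mathrm{id}_H\otimes\Delta)(\nu(h))\in H\otimes\operatorname{Z}(H)\otimes H$.
   Context: All vector spaces are over a field $k$, $\otimes=\otimes_k$. For a Hopf algebra $H$ with comultiplication $\Delta$, counit $\epsilon$, antipode $S$, we use Sweedler notation $\Delta(h)=h_1\otimes h_2$, etc. $\operatorname{Z}(H)$ is the centre of $H$. For $R\in H\otimes H$ we write $R=R^{(1)}\otimes R^{(2)}$ (summation understood); $R'^{(1)}\otimes R'^{(2)}$ denotes another copy of $R$. Definition (semiquasitriangular Hopf algebra): a pair $(H,R)$ with $H$ a Hopf algebra with bijective antipode and $R\in H\otimes H$ invertible such that (1) $R^{(1)}_1\otimes R^{(1)}_2\otimes R^{(2)} = R^{(1)}\otimes R'^{(1)}\otimes R^{(2)}R'^{(2)}$; (2) $R^{(1)}\otimes R^{(2)}_1\otimes R^{(2)}_2 = R^{(1)}R'^{(1)}\otimes R'^{(2)}\otimes R^{(2)}$; (3) $R^{(1)}\otimes R^{(2)}_2R'^{(1)}\otimes R^{(2)}_1R'^{(2)} = R^{(1)}\otimes R'^{(1)}R^{(2)}_1\otimes R'^{(2)}R^{(2)}_2$; (4) $R^{(1)}_2R'^{(1)}\otimes R^{(1)}_1R'^{(2)}\otimes R^{(2)} = R'^{(1)}R^{(1)}_1\otimes R'^{(2)}R^{(1)}_2\otimes R^{(2)}$; (5) $\nu(h):=R^{(2)}h_2R'^{(2)}\otimes S(h_1)S(R^{(1)})h_3R'^{(1)}\in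 H\otimes\operatorname{Z}(H)$ for all $h\in H$; (6) $\nu(h)=R^{(1)}h_2R'^{(1)}\otimes S(R'^{(2)})S(h_1)R^{(2)}h_3$ for all $h\in H$. The map $\nu$ in the claim is the one defined in (5). *)

theory Defs
  imports Main "HOL.Vector_Spaces"
begin

text \<open>The Hopf algebra H is a
type 'h whose ring structure (class ring_1) is the algebra structure of H, with a scalar
multiplication sc making it a k-vector space and a k-algebra. Elements of H (x) H and
H (x) H (x) H are represented by finite formal sums, i.e. lists of pairs / triples; two
such lists represent the same tensor iff every bilinear / trilinear form H x H (x H) -> k
takes the same value on them (over a field this is exactly equality in the algebraic
tensor product).\<close>

definition klin :: "('k::field \<Rightarrow> 'h::ab_group_add \<Rightarrow> 'h) \<Rightarrow> ('h \<Rightarrow> 'k) \<Rightarrow> bool" where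
  "klin sc f \<longleftrightarrow> Vector_Spaces.linear sc (*) f"

definition bilin_form :: "('k::field \<Rightarrow> 'h::ab_group_add \<Rightarrow> 'h) \<Rightarrow> ('h \<Rightarrow> 'h \<Rightarrow> 'k) \<Rightarrow> bool" where
  "bilin_form sc \<beta> \<longleftrightarrow> (\<forall>b. klin sc (\<lambda>a. \<beta> a b)) \<and> (\<forall>a. klin sc (\<beta> a))"

definition trilin_form :: "('k::field \<Rightarrow> 'h::ab_group_add \<Rightarrow> 'h) \<Rightarrow> ('h \<Rightarrow> 'h \<Rightarrow> 'h \<Rightarrow> 'k) \<Rightarrow> bool" where
  "trilin_form sc \<tau> \<longleftrightarrow> (\<forall>b c. klin sc (\<lambda>a. \<tau> a b c)) \<and> (\<forall>a c. klin sc (\<lambda>b. \<tau> a b c))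
      \<and> (\<forall>a b. klin sc (\<tau> a b))"

definition teq2 :: "('k::field \<Rightarrow> 'h::ab_group_add \<Rightarrow> 'h) \<Rightarrow> ('h \<times> 'h) list \<Rightarrow> ('h \<times> 'h) list \<Rightarrow> bool" where
  "teq2 sc xs ys \<longleftrightarrow> (\<forall>\<beta>. bilin_form sc \<beta> \<longrightarrow>
      (\<Sum>(a,b)\<leftarrow>xs. \<beta> a b) = (\<Sum>(a,b)\<leftarrow>ys. \<beta> a b))"

definition teq3 :: "('k::field \<Rightarrow> 'h::ab_group_add \<Rightarrow> 'h) \<Rightarrow> ('h \<times> 'h \<times> 'h) list \<Rightarrow> ('h \<times> 'h \<times> 'h) list \<Rightarrow> bool" where
  "teq3 sc xs ys \<longleftrightarrow> (\<forall>\<tau>. trilin_form sc \<tau> \<longrightarrow>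
      (\<Sum>(a,b,c)\<leftarrow>xs. \<tau> a b c) = (\<Sum>(a,b,c)\<leftarrow>ys. \<tau> a b c))"

definition centre :: "'h::ring_1 set" where
  "centre = {z. \<forall>x. z * x = x * z}"

definition tmul2 :: "('h::ring_1 \<times> 'h) list \<Rightarrow> ('h \<times> 'h) list \<Rightarrow> ('h \<times> 'h) list" where
  "tmul2 xs ys = [(a * c, b * d). (a,b) \<leftarrow> xs, (c,d) \<leftarrow> ys]"

definition Delta3 :: "('h \<Rightarrow> ('h \<times> 'h) list) \<Rightarrow> 'h \<Rightarrow> ('h \<times> 'h \<times> 'h) list" where
  "Delta3 \<Delta> h = [(x1, x2, y). (x,y) \<leftarrow> \<Delta> h, (x1,x2) \<leftarrow> \<Delta> x]"

definition hopf_algebra ::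
  "('k::field \<Rightarrow> 'h::ring_1 \<Rightarrow> 'h) \<Rightarrow> ('h \<Rightarrow> ('h \<times> 'h) list) \<Rightarrow> ('h \<Rightarrow> 'k) \<Rightarrow> ('h \<Rightarrow> 'h) \<Rightarrow> bool" where
  "hopf_algebra sc \<Delta> \<epsilon> S \<longleftrightarrow>
     vector_space sc
   \<and> (\<forall>c a b. sc c (a * b) = sc c a * b \<and> sc c (a * b) = a * sc c b)
   \<comment> \<open>comultiplication: linear, coassociative, algebra map\<close>
   \<and> (\<forall>a b. teq2 sc (\<Delta> (a + b)) (\<Delta> a @ \<Delta> b))
   \<and> (\<forall>c a. teq2 sc (\<Delta> (sc c a)) (map (\<lambda>(x,y). (sc c x, y)) (\<Delta> a)))
   \<and> (\<forall>h. teq3 sc (Delta3 \<Delta> h) [(x, y1, y2). (x,y) \<leftarrow> \<Delta> h, (y1,y2) \<leftarrow> \<Delta> y])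
   \<and> (\<forall>a b. teq2 sc (\<Delta> (a * b)) (tmul2 (\<Delta> a) (\<Delta> b)))
   \<and> teq2 sc (\<Delta> 1) [(1, 1)]
   \<comment> \<open>counit: linear, algebra map, counit axioms\<close>
   \<and> klin sc \<epsilon>
   \<and> (\<forall>a b. \<epsilon> (a * b) = \<epsilon> a * \<epsilon> b) \<and> \<epsilon> 1 = 1
   \<and> (\<forall>h. (\<Sum>(x,y)\<leftarrow>\<Delta> h. sc (\<epsilon> x) y) = h)
   \<and> (\<forall>h. (\<Sum>(x,y)\<leftarrow>\<Delta> h. sc (\<epsilon> y) x) = h)
   \<comment> \<open>antipode: linear, bijective, antipode axioms\<close>
   \<and> Vector_Spaces.linear sc sc S
   \<and> bij S
   \<and> (\<forall>h. (\<Sum>(x,y)\<leftarrow>\<Delta> h. S x * y) = sc (\<epsilon> h) 1)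
   \<and> (\<forall>h. (\<Sum>(x,y)\<leftarrow>\<Delta> h. x * S y) = sc (\<epsilon> h) 1)"

definition nu :: "('h::ring_1 \<Rightarrow> ('h \<times> 'h) list) \<Rightarrow> ('h \<Rightarrow> 'h) \<Rightarrow> ('h \<times> 'h) list \<Rightarrow> 'h \<Rightarrow> ('h \<times> 'h) list" where
  "nu \<Delta> S R h = [(r2 * h2 * s2, S h1 * S r1 * h3 * s1).
                    (r1,r2) \<leftarrow> R, (h1,h2,h3) \<leftarrow> Delta3 \<Delta> h, (s1,s2) \<leftarrow> R]"

definition semiquasitriangular ::
  "('k::field \<Rightarrow> 'h::ring_1 \<Rightarrow> 'h) \<Rightarrow> ('h \<Rightarrow> ('h \<times> 'h) list) \<Rightarrow> ('h \<Rightarrow> 'k) \<Rightarrow> ('h \<Rightarrow> 'h)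
     \<Rightarrow> ('h \<times> 'h) list \<Rightarrow> bool" where
  "semiquasitriangular sc \<Delta> \<epsilon> S R \<longleftrightarrow>
     hopf_algebra sc \<Delta> \<epsilon> S
   \<comment> \<open>R is invertible in H (x) H\<close>
   \<and> (\<exists>Q. teq2 sc (tmul2 R Q) [(1,1)] \<and> teq2 sc (tmul2 Q R) [(1,1)])
   \<comment> \<open>(1)\<close>
   \<and> teq3 sc [(x1, x2, r2). (r1,r2) \<leftarrow> R, (x1,x2) \<leftarrow> \<Delta> r1]
             [(r1, s1, r2 * s2). (r1,r2) \<leftarrow> R, (s1,s2) \<leftarrow> R]
   \<comment> \<open>(2)\<close>
   \<and> teq3 sc [(r1, y1, y2). (r1,r2) \<leftarrow> R, (y1,y2) \<leftarrow> \<Delta> r2]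
             [(r1 * s1, s2, r2). (r1,r2) \<leftarrow> R, (s1,s2) \<leftarrow> R]
   \<comment> \<open>(3)\<close>
   \<and> teq3 sc [(r1, y2 * s1, y1 * s2). (r1,r2) \<leftarrow> R, (y1,y2) \<leftarrow> \<Delta> r2, (s1,s2) \<leftarrow> R]
             [(r1, s1 * y1, s2 * y2). (r1,r2) \<leftarrow> R, (y1,y2) \<leftarrow> \<Delta> r2, (s1,s2) \<leftarrow> R]
   \<comment> \<open>(4)\<close>
   \<and> teq3 sc [(x2 * s1, x1 * s2, r2). (r1,r2) \<leftarrow> R, (x1,x2) \<leftarrow> \<Delta> r1, (s1,s2) \<leftarrow> R]
             [(s1 * x1, s2 * x2, r2). (r1,r2) \<leftarrow> R, (x1,x2) \<leftarrow> \<Delta> r1, (s1,s2) \<leftarrow> R]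
   \<comment> \<open>(5): nu(h) lies in H (x) Z(H)\<close>
   \<and> (\<forall>h. \<exists>ys. (\<forall>(a,z) \<in> set ys. z \<in> centre) \<and> teq2 sc (nu \<Delta> S R h) ys)
   \<comment> \<open>(6)\<close>
   \<and> (\<forall>h. teq2 sc (nu \<Delta> S R h)
            [(r1 * h2 * s1, S s2 * S h1 * r2 * h3).
               (r1,r2) \<leftarrow> R, (h1,h2,h3) \<leftarrow> Delta3 \<Delta> h, (s1,s2) \<leftarrow> R])"

end

theory Submission imports Defs begin

definition lin :: "('k::field \<Rightarrow> 'h::ab_group_add \<Rightarrow> 'h) \<Rightarrow> ('h \<Rightarrow> 'k) \<Rightarrow> bool" where
  "lin sc f \<longleftrightarrow> (\<forall>x y. f (x + y) = f x + f y) \<and> (\<forall>c x. f (sc c x) = c * f x)"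

definition linH :: "('k::field \<Rightarrow> 'h::ab_group_add \<Rightarrow> 'h) \<Rightarrow> ('h \<Rightarrow> 'h) \<Rightarrow> bool" where
  "linH sc g \<longleftrightarrow> (\<forall>x y. g (x + y) = g x + g y) \<and> (\<forall>c x. g (sc c x) = sc c (g x))"

definition bil :: "('k::field \<Rightarrow> 'h::ab_group_add \<Rightarrow> 'h) \<Rightarrow> ('h \<Rightarrow> 'h \<Rightarrow> 'k) \<Rightarrow> bool" where
  "bil sc \<beta> \<longleftrightarrow> (\<forall>b. lin sc (\<lambda>a. \<beta> a b)) \<and> (\<forall>a. lin sc (\<lambda>b. \<beta> a b))"

definition tri :: "('k::field \<Rightarrow> 'h::ab_group_add \<Rightarrow> 'h) \<Rightarrow> ('h \<Rightarrow> 'h \<Rightarrow> 'h \<Rightarrow> 'k) \<Rightarrow> bool" where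
  "tri sc \<tau> \<longleftrightarrow> (\<forall>b c. lin sc (\<lambda>a. \<tau> a b c)) \<and> (\<forall>a c. lin sc (\<lambda>b. \<tau> a b c))
      \<and> (\<forall>a b. lin sc (\<lambda>c. \<tau> a b c))"

definition psum :: "('a \<times> 'b) list \<Rightarrow> ('a \<Rightarrow> 'b \<Rightarrow> 'c::comm_monoid_add) \<Rightarrow> 'c" where
  "psum L F = sum_list (map (\<lambda>(x,y). F x y) L)"

lemma vs_field: "vector_space ((*) :: 'k::field \<Rightarrow> 'k \<Rightarrow> 'k)"
  by unfold_locales (auto simp: algebra_simps)

lemma klin_iff: "vector_space sc \<Longrightarrow> klin sc f \<longleftrightarrow> lin sc f"
  unfolding klin_def lin_def Vector_Spaces.linear_def module_hom_def module_hom_axioms_def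
  using vs_field by (auto simp: module_iff_vector_space)

lemma bil_iff: "vector_space sc \<Longrightarrow> bilin_form sc \<beta> \<longleftrightarrow> bil sc \<beta>"
  unfolding bilin_form_def bil_def by (simp add: klin_iff)

lemma tri_iff: "vector_space sc \<Longrightarrow> trilin_form sc \<tau> \<longleftrightarrow> tri sc \<tau>"
  unfolding trilin_form_def tri_def by (simp add: klin_iff)

lemma psum_Nil[simp]: "psum [] F = 0" by (simp add: psum_def)
lemma psum_Cons[simp]: "psum (p # L) F = F (fst p) (snd p) + psum L F"
  by (simp add: psum_def split_def)
lemma psum_append[simp]: "psum (L @ M) F = psum L F + psum M F"
  by (simp add: psum_def)
lemma psum_add: "psum L (\<lambda>x y. F x y + G x y) = psum L F + psum L G"
  by (induction L) (auto simp: algebra_simps)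
lemma psum_cmult: "psum L (\<lambda>x y. (c::'c::semiring_0) * F x y) = c * psum L F"
  by (induction L) (auto simp: algebra_simps)
lemma psum_multc: "psum L (\<lambda>x y. F x y * (c::'c::semiring_0)) = psum L F * c"
  by (induction L) (auto simp: algebra_simps)
lemma psum_zero[simp]: "psum L (\<lambda>x y. 0) = 0"
  by (induction L) auto
lemma psum_cong: "(\<And>x y. (x,y) \<in> set L \<Longrightarrow> F x y = G x y) \<Longrightarrow> psum L F = psum L G"
  by (induction L) auto
lemma psum_swap: "psum L (\<lambda>x y. psum M (F x y)) = psum M (\<lambda>u v. psum L (\<lambda>x y. F x y u v))"
  by (induction L) (auto simp: psum_add)
lemma psum_swap2: "psum L (\<lambda>x y. psum (M x y) (\<lambda>u v. psum N (F x y u v)))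
   = psum N (\<lambda>e f. psum L (\<lambda>x y. psum (M x y) (\<lambda>u v. F x y u v e f)))"
proof -
  have "psum L (\<lambda>x y. psum (M x y) (\<lambda>u v. psum N (F x y u v)))
     = psum L (\<lambda>x y. psum N (\<lambda>e f. psum (M x y) (\<lambda>u v. F x y u v e f)))"
    by (rule psum_cong) (rule psum_swap)
  also have "\<dots> = psum N (\<lambda>e f. psum L (\<lambda>x y. psum (M x y) (\<lambda>u v. F x y u v e f)))"
    by (rule psum_swap)
  finally show ?thesis .
qed

lemma psum_map: "psum (map f L) F = psum L (\<lambda>x y. F (fst (f (x,y))) (snd (f (x,y))))"
  by (induction L) auto
lemma psum_concat: "psum (concat Ls) F = sum_list (map (\<lambda>L. psum L F) Ls)"
  by (induction Ls) auto

lemma sl_concat: "sum_list (concat xss) = sum_list (map sum_list (xss::'a::monoid_add list list))"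
  by (induction xss) auto

lemma sl_map_concat: "sum_list (map f (concat xss)) = sum_list (map (\<lambda>xs. sum_list (map f xs)) xss)"
  by (induction xss) auto

lemma lin_sum_list:
  assumes "lin sc f" shows "f (sum_list (map g L)) = sum_list (map (\<lambda>x. f (g x)) L)"
proof -
  have z: "f 0 = 0" using assms unfolding lin_def by (metis add_cancel_right_right add_0)
  show ?thesis using assms z by (induction L) (auto simp: lin_def)
qed

lemma lin_psum_push:
  assumes "lin sc f" shows "f (psum L G) = psum L (\<lambda>x y. f (G x y))"
  using assms unfolding psum_def by (simp add: lin_sum_list split_def)


locale hopfL =
  fixes sc :: "'k::field \<Rightarrow> 'h::ring_1 \<Rightarrow> 'h" and \<Delta> :: "'h \<Rightarrow> ('h \<times> 'h) list"
    and \<epsilon> :: "'h \<Rightarrow> 'k" and S :: "'h \<Rightarrow> 'h"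
  assumes HA: "hopf_algebra sc \<Delta> \<epsilon> S"
begin

lemma vs: "vector_space sc" using HA by (simp add: hopf_algebra_def)

lemma scm1[simp]: "sc c a * b = sc c (a * b)" using HA by (simp add: hopf_algebra_def)
lemma scm2[simp]: "a * sc c b = sc c (a * b)" using HA by (simp add: hopf_algebra_def)

lemma sc_add[simp]: "sc c (a + b) = sc c a + sc c b"
  using vs by (simp add: vector_space.vector_space_assms(1))
lemma sc_one[simp]: "sc 1 a = a"
  using vs by (simp add: vector_space.vector_space_assms(4))

lemma S_lin: "Vector_Spaces.linear sc sc S" using HA by (simp add: hopf_algebra_def)
lemma S_add[simp]: "S (a + b) = S a + S b"
  using S_lin by (simp add: Vector_Spaces.linear_def module_hom_def module_hom_axioms_def)
lemma S_scale[simp]: "S (sc c a) = sc c (S a)"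
  using S_lin by (simp add: Vector_Spaces.linear_def module_hom_def module_hom_axioms_def)

lemma eps_lin: "lin sc \<epsilon>" using HA vs by (simp add: hopf_algebra_def klin_iff)
lemma eps_add[simp]: "\<epsilon> (a + b) = \<epsilon> a + \<epsilon> b" using eps_lin by (simp add: lin_def)
lemma eps_scale[simp]: "\<epsilon> (sc c a) = c * \<epsilon> a" using eps_lin by (simp add: lin_def)
lemma eps_mult: "\<epsilon> (a * b) = \<epsilon> a * \<epsilon> b" using HA by (simp add: hopf_algebra_def)
lemma eps_one: "\<epsilon> 1 = 1" using HA by (simp add: hopf_algebra_def)

lemma teq2_use: "teq2 sc xs ys \<Longrightarrow> bil sc \<beta> \<Longrightarrow> psum xs \<beta> = psum ys \<beta>"
  unfolding teq2_def psum_def using vs by (simp add: bil_iff)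

lemma teq3_use: "teq3 sc xs ys \<Longrightarrow> tri sc \<tau> \<Longrightarrow>
   sum_list (map (\<lambda>(a,b,c). \<tau> a b c) xs) = sum_list (map (\<lambda>(a,b,c). \<tau> a b c) ys)"
  unfolding teq3_def using vs by (simp add: tri_iff)

lemma bil_lin1: "bil sc \<beta> \<Longrightarrow> lin sc (\<lambda>a. \<beta> a b)" by (simp add: bil_def)
lemma bil_lin2: "bil sc \<beta> \<Longrightarrow> lin sc (\<lambda>b. \<beta> a b)" by (simp add: bil_def)

lemma dsum_add: "bil sc \<beta> \<Longrightarrow> psum (\<Delta> (a + b)) \<beta> = psum (\<Delta> a) \<beta> + psum (\<Delta> b) \<beta>"
  using HA teq2_use unfolding hopf_algebra_def by (metis psum_append)

lemma dsum_scale: "bil sc \<beta> \<Longrightarrow> psum (\<Delta> (sc c a)) \<beta> = c * psum (\<Delta> a) \<beta>"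
proof -
  assume b: "bil sc \<beta>"
  have "psum (\<Delta> (sc c a)) \<beta> = psum (map (\<lambda>(x,y). (sc c x, y)) (\<Delta> a)) \<beta>"
    using HA b teq2_use unfolding hopf_algebra_def by blast
  also have "\<dots> = psum (\<Delta> a) (\<lambda>x y. c * \<beta> x y)"
    unfolding psum_map using bil_lin1[OF b] by (simp add: lin_def)
  finally show ?thesis by (simp add: psum_cmult)
qed

lemma dsum_mult: "bil sc \<beta> \<Longrightarrow>
  psum (\<Delta> (a * b)) \<beta> = psum (\<Delta> a) (\<lambda>x y. psum (\<Delta> b) (\<lambda>u v. \<beta> (x * u) (y * v)))"
proof -
  assume b: "bil sc \<beta>"
  have "psum (\<Delta> (a * b)) \<beta> = psum (tmul2 (\<Delta> a) (\<Delta> b)) \<beta>"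
    using HA b teq2_use unfolding hopf_algebra_def by blast
  also have "\<dots> = psum (\<Delta> a) (\<lambda>x y. psum (\<Delta> b) (\<lambda>u v. \<beta> (x * u) (y * v)))"
    unfolding tmul2_def psum_concat psum_map by (simp add: psum_def split_def o_def)
  finally show ?thesis .
qed

lemma dsum_one: "bil sc \<beta> \<Longrightarrow> psum (\<Delta> 1) \<beta> = \<beta> 1 1"
  using HA teq2_use unfolding hopf_algebra_def by fastforce

lemma coassoc: "tri sc \<tau> \<Longrightarrow>
  psum (\<Delta> h) (\<lambda>x y. psum (\<Delta> x) (\<lambda>x1 x2. \<tau> x1 x2 y))
  = psum (\<Delta> h) (\<lambda>x y. psum (\<Delta> y) (\<lambda>y1 y2. \<tau> x y1 y2))"
proof -
  assume t: "tri sc \<tau>"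
  have "teq3 sc (Delta3 \<Delta> h) [(x, y1, y2). (x,y) \<leftarrow> \<Delta> h, (y1,y2) \<leftarrow> \<Delta> y]"
    using HA unfolding hopf_algebra_def by blast
  from teq3_use[OF this t] show ?thesis
    unfolding Delta3_def psum_def by (simp add: split_def o_def sl_map_concat)
qed


lemma linH_id: "linH sc (\<lambda>x. x)" by (simp add: linH_def)
lemma linH_multR: "linH sc g \<Longrightarrow> linH sc (\<lambda>x. g x * b)" by (simp add: linH_def distrib_right)
lemma linH_multL: "linH sc g \<Longrightarrow> linH sc (\<lambda>x. b * g x)" by (simp add: linH_def distrib_left)
lemma linH_S: "linH sc g \<Longrightarrow> linH sc (\<lambda>x. S (g x))" by (simp add: linH_def)
lemma lin_psum: "(\<And>u v. lin sc (\<lambda>x. F x u v)) \<Longrightarrow> lin sc (\<lambda>x. psum L (\<lambda>u v. F x u v))"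
proof -
  assume a: "\<And>u v. lin sc (\<lambda>x. F x u v)"
  have 1: "psum L (F (x + y)) = psum L (F x) + psum L (F y)" for x y
  proof -
    have "psum L (F (x + y)) = psum L (\<lambda>u v. F x u v + F y u v)"
      using a by (intro psum_cong) (simp add: lin_def)
    thus ?thesis by (simp add: psum_add)
  qed
  have 2: "psum L (F (sc c x)) = c * psum L (F x)" for c x
  proof -
    have "psum L (F (sc c x)) = psum L (\<lambda>u v. c * F x u v)"
      using a by (intro psum_cong) (simp add: lin_def)
    thus ?thesis by (simp add: psum_cmult)
  qed
  show ?thesis using 1 2 by (simp add: lin_def)
qed
lemma lin_add: "lin sc f \<Longrightarrow> lin sc g \<Longrightarrow> lin sc (\<lambda>x. f x + g x)"
  by (simp add: lin_def algebra_simps)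
lemma lin_cmult: "lin sc f \<Longrightarrow> lin sc (\<lambda>x. c * f x)" by (simp add: lin_def algebra_simps)
lemma lin_multc: "lin sc f \<Longrightarrow> lin sc (\<lambda>x. f x * c)" by (simp add: lin_def algebra_simps)
lemma lin_comp: "lin sc f \<Longrightarrow> linH sc g \<Longrightarrow> lin sc (\<lambda>x. f (g x))" by (simp add: lin_def linH_def)
lemma lin_eps: "linH sc g \<Longrightarrow> lin sc (\<lambda>x. \<epsilon> (g x))" by (rule lin_comp[OF eps_lin])
lemma lin_dsum: "linH sc g \<Longrightarrow> bil sc \<beta> \<Longrightarrow> lin sc (\<lambda>x. psum (\<Delta> (g x)) \<beta>)"
  by (simp add: lin_def linH_def dsum_add dsum_scale)
lemma bilI: "(\<And>b. lin sc (\<lambda>a. \<beta> a b)) \<Longrightarrow> (\<And>a. lin sc (\<lambda>b. \<beta> a b)) \<Longrightarrow> bil sc \<beta>"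
  by (simp add: bil_def)
lemma triI: "(\<And>b c. lin sc (\<lambda>a. \<tau> a b c)) \<Longrightarrow> (\<And>a c. lin sc (\<lambda>b. \<tau> a b c))
   \<Longrightarrow> (\<And>a b. lin sc (\<lambda>c. \<tau> a b c)) \<Longrightarrow> tri sc \<tau>"
  by (simp add: tri_def)
lemma lin_bilA: "bil sc \<beta> \<Longrightarrow> linH sc g \<Longrightarrow> lin sc (\<lambda>x. \<beta> (g x) b)"
  by (simp add: bil_def lin_def linH_def)
lemma lin_bilB: "bil sc \<beta> \<Longrightarrow> linH sc g \<Longrightarrow> lin sc (\<lambda>x. \<beta> a (g x))"
  by (simp add: bil_def lin_def linH_def)
lemma lin_triA: "tri sc \<tau> \<Longrightarrow> linH sc g \<Longrightarrow> lin sc (\<lambda>x. \<tau> (g x) b c)"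
  by (simp add: tri_def lin_def linH_def)
lemma lin_triB: "tri sc \<tau> \<Longrightarrow> linH sc g \<Longrightarrow> lin sc (\<lambda>x. \<tau> a (g x) c)"
  by (simp add: tri_def lin_def linH_def)
lemma lin_triC: "tri sc \<tau> \<Longrightarrow> linH sc g \<Longrightarrow> lin sc (\<lambda>x. \<tau> a b (g x))"
  by (simp add: tri_def lin_def linH_def)

lemmas linrules = linH_id linH_multR linH_multL linH_S lin_psum lin_add lin_cmult lin_multc
  lin_eps lin_dsum bilI triI

lemma counitL: "lin sc f \<Longrightarrow> psum (\<Delta> h) (\<lambda>x y. \<epsilon> x * f y) = f h"
proof -
  assume f: "lin sc f"
  have "psum (\<Delta> h) (\<lambda>x y. sc (\<epsilon> x) y) = h" using HA by (simp add: hopf_algebra_def psum_def)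
  hence "f h = psum (\<Delta> h) (\<lambda>x y. f (sc (\<epsilon> x) y))" using lin_psum_push[OF f] by metis
  thus ?thesis using f by (simp add: lin_def)
qed

lemma counitR: "lin sc f \<Longrightarrow> psum (\<Delta> h) (\<lambda>x y. \<epsilon> y * f x) = f h"
proof -
  assume f: "lin sc f"
  have "psum (\<Delta> h) (\<lambda>x y. sc (\<epsilon> y) x) = h" using HA by (simp add: hopf_algebra_def psum_def)
  hence "f h = psum (\<Delta> h) (\<lambda>x y. f (sc (\<epsilon> y) x))" using lin_psum_push[OF f] by metis
  thus ?thesis using f by (simp add: lin_def)
qed

lemma antipL: "lin sc f \<Longrightarrow> psum (\<Delta> h) (\<lambda>x y. f (S x * y)) = \<epsilon> h * f 1"
proof -
  assume f: "lin sc f"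
  have "psum (\<Delta> h) (\<lambda>x y. S x * y) = sc (\<epsilon> h) 1" using HA by (simp add: hopf_algebra_def psum_def)
  hence "f (sc (\<epsilon> h) 1) = psum (\<Delta> h) (\<lambda>x y. f (S x * y))" using lin_psum_push[OF f] by metis
  thus ?thesis using f by (simp add: lin_def)
qed

lemma antipR: "lin sc f \<Longrightarrow> psum (\<Delta> h) (\<lambda>x y. f (x * S y)) = \<epsilon> h * f 1"
proof -
  assume f: "lin sc f"
  have "psum (\<Delta> h) (\<lambda>x y. x * S y) = sc (\<epsilon> h) 1" using HA by (simp add: hopf_algebra_def psum_def)
  hence "f (sc (\<epsilon> h) 1) = psum (\<Delta> h) (\<lambda>x y. f (x * S y))" using lin_psum_push[OF f] by metis
  thus ?thesis using f by (simp add: lin_def)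
qed


lemma antiS:
  assumes b: "bil sc \<beta>"
  shows "psum (\<Delta> (S a)) \<beta> = psum (\<Delta> a) (\<lambda>x y. \<beta> (S y) (S x))"
proof -
  note bA = lin_bilA[OF b] and bB = lin_bilB[OF b]
  define Q where "Q a1 a2 a3 = psum (\<Delta> (S a1)) (\<lambda>u v. psum (\<Delta> a2) (\<lambda>p q.
      psum (\<Delta> a3) (\<lambda>m n. \<beta> (u*p*S n) (v*q*S m))))" for a1 a2 a3
  define X where "X = psum (\<Delta> a) (\<lambda>w a3. psum (\<Delta> w) (\<lambda>a1 a2. Q a1 a2 a3))"
  have i: "psum (\<Delta> w) (\<lambda>a1 a2. Q a1 a2 a3) = \<epsilon> w * psum (\<Delta> a3) (\<lambda>m n. \<beta> (S n) (S m))" for w a3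
  proof -
    define \<gamma> where "\<gamma> c d = psum (\<Delta> a3) (\<lambda>m n. \<beta> (c * S n) (d * S m))" for c d
    have bg: "bil sc \<gamma>" unfolding \<gamma>_def by (intro linrules bA bB)
    have "Q a1 a2 a3 = psum (\<Delta> (S a1 * a2)) \<gamma>" for a1 a2
      unfolding dsum_mult[OF bg] Q_def \<gamma>_def by simp
    hence "psum (\<Delta> w) (\<lambda>a1 a2. Q a1 a2 a3) = psum (\<Delta> w) (\<lambda>a1 a2. psum (\<Delta> (S a1 * a2)) \<gamma>)"
      by simp
    also have "\<dots> = \<epsilon> w * psum (\<Delta> 1) \<gamma>"
      by (rule antipL[where f="\<lambda>z. psum (\<Delta> z) \<gamma>"]) (intro linrules bg)
    also have "\<dots> = \<epsilon> w * psum (\<Delta> a3) (\<lambda>m n. \<beta> (S n) (S m))"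
      unfolding dsum_one[OF bg] \<gamma>_def by simp
    finally show ?thesis .
  qed
  have X1: "X = psum (\<Delta> a) (\<lambda>x y. \<beta> (S y) (S x))"
    unfolding X_def i by (rule counitL) (intro linrules bA bB)
  have trQ: "tri sc Q" unfolding Q_def by (intro linrules bA bB)
  have K: "psum (\<Delta> y) (\<lambda>a2 a3. psum (\<Delta> a2) (\<lambda>p q.
      psum (\<Delta> a3) (\<lambda>m n. \<beta> (u*p*S n) (v*q*S m)))) = \<epsilon> y * \<beta> u v" for u v y
  proof -
    define G where "G p q a3 = psum (\<Delta> a3) (\<lambda>m n. \<beta> (u*p*S n) (v*q*S m))" for p q a3
    have tG: "tri sc G" unfolding G_def by (intro linrules bA bB)
    have "psum (\<Delta> y) (\<lambda>a2 a3. psum (\<Delta> a2) (\<lambda>p q. G p q a3))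
        = psum (\<Delta> y) (\<lambda>p z. psum (\<Delta> z) (\<lambda>q a3. G p q a3))"
      by (rule coassoc[OF tG])
    also have "\<dots> = psum (\<Delta> y) (\<lambda>p z. \<beta> (u*p*S z) v)"
    proof (rule psum_cong)
      fix p z
      define f where "f q m n = \<beta> (u*p*S n) (v*q*S m)" for q m n
      have tf: "tri sc f" unfolding f_def by (intro linrules bA bB)
      have "psum (\<Delta> z) (\<lambda>q a3. G p q a3) = psum (\<Delta> z) (\<lambda>q a3. psum (\<Delta> a3) (\<lambda>m n. f q m n))"
        unfolding G_def f_def by simp
      also have "\<dots> = psum (\<Delta> z) (\<lambda>w n. psum (\<Delta> w) (\<lambda>q m. f q m n))"
        by (rule coassoc[OF tf, symmetric])
      also have "\<dots> = psum (\<Delta> z) (\<lambda>w n. \<epsilon> w * \<beta> (u*p*S n) v)"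
      proof (rule psum_cong)
        fix w n
        have "psum (\<Delta> w) (\<lambda>q m. f q m n) = psum (\<Delta> w) (\<lambda>q m. (\<lambda>t. \<beta> (u*p*S n) (v*t)) (q * S m))"
          unfolding f_def by (simp add: mult.assoc)
        also have "\<dots> = \<epsilon> w * \<beta> (u*p*S n) v"
          by (subst antipR) (intro linrules bA bB, simp)
        finally show "psum (\<Delta> w) (\<lambda>q m. f q m n) = \<epsilon> w * \<beta> (u*p*S n) v" .
      qed
      also have "\<dots> = \<beta> (u*p*S z) v"
        by (rule counitL) (intro linrules bA bB)
      finally show "psum (\<Delta> z) (\<lambda>q a3. G p q a3) = \<beta> (u*p*S z) v" .
    qed
    also have "\<dots> = psum (\<Delta> y) (\<lambda>p z. (\<lambda>t. \<beta> (u*t) v) (p * S z))"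
      by (simp add: mult.assoc)
    also have "\<dots> = \<epsilon> y * \<beta> u v"
      by (subst antipR) (intro linrules bA bB, simp)
    finally show ?thesis unfolding G_def .
  qed
  have "X = psum (\<Delta> a) (\<lambda>a1 y. psum (\<Delta> y) (\<lambda>a2 a3. Q a1 a2 a3))"
    unfolding X_def by (rule coassoc[OF trQ])
  also have "\<dots> = psum (\<Delta> a) (\<lambda>a1 y. \<epsilon> y * psum (\<Delta> (S a1)) \<beta>)"
  proof (rule psum_cong)
    fix a1 y
    have "psum (\<Delta> y) (\<lambda>a2 a3. Q a1 a2 a3) = psum (\<Delta> (S a1)) (\<lambda>u v. psum (\<Delta> y) (\<lambda>a2 a3.
       psum (\<Delta> a2) (\<lambda>p q. psum (\<Delta> a3) (\<lambda>m n. \<beta> (u*p*S n) (v*q*S m)))))"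
      unfolding Q_def by (rule psum_swap)
    also have "\<dots> = psum (\<Delta> (S a1)) (\<lambda>u v. \<epsilon> y * \<beta> u v)" by (simp add: K)
    finally show "psum (\<Delta> y) (\<lambda>a2 a3. Q a1 a2 a3) = \<epsilon> y * psum (\<Delta> (S a1)) \<beta>"
      by (simp add: psum_cmult)
  qed
  also have "\<dots> = psum (\<Delta> (S a)) \<beta>"
    by (rule counitR) (intro linrules b)
  finally show ?thesis using X1 by simp
qed


lemma coassoc5:
  assumes l1: "\<And>b c d e. lin sc (\<lambda>a. W a b c d e)" and l2: "\<And>a c d e. lin sc (\<lambda>b. W a b c d e)"
    and l3: "\<And>a b d e. lin sc (\<lambda>c. W a b c d e)" and l4: "\<And>a b c e. lin sc (\<lambda>d. W a b c d e)"
    and l5: "\<And>a b c d. lin sc (\<lambda>e. W a b c d e)"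
  shows "psum (\<Delta> h) (\<lambda>u h3. psum (\<Delta> u) (\<lambda>h1 h2. psum (\<Delta> h1) (\<lambda>a b. psum (\<Delta> h3) (\<lambda>e f. W a b h2 e f))))
       = psum (\<Delta> h) (\<lambda>m y. psum (\<Delta> m) (\<lambda>x k. psum (\<Delta> k) (\<lambda>n k3. psum (\<Delta> n) (\<lambda>k1 k2. W x k1 k2 k3 y))))"
proof -
  have "psum (\<Delta> h) (\<lambda>u h3. psum (\<Delta> u) (\<lambda>h1 h2. psum (\<Delta> h1) (\<lambda>a b. psum (\<Delta> h3) (\<lambda>e f. W a b h2 e f))))
     = psum (\<Delta> h) (\<lambda>u h3. psum (\<Delta> u) (\<lambda>a w. psum (\<Delta> w) (\<lambda>b h2. psum (\<Delta> h3) (\<lambda>e f. W a b h2 e f))))"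
  proof (rule psum_cong)
    fix u h3
    have t: "tri sc (\<lambda>a b h2. psum (\<Delta> h3) (\<lambda>e f. W a b h2 e f))"
      by (intro linrules l1 l2 l3 l4 l5)
    show "psum (\<Delta> u) (\<lambda>h1 h2. psum (\<Delta> h1) (\<lambda>a b. psum (\<Delta> h3) (\<lambda>e f. W a b h2 e f)))
      = psum (\<Delta> u) (\<lambda>a w. psum (\<Delta> w) (\<lambda>b h2. psum (\<Delta> h3) (\<lambda>e f. W a b h2 e f)))"
      by (rule coassoc[OF t])
  qed
  also have "\<dots> = psum (\<Delta> h) (\<lambda>u h3. psum (\<Delta> h3) (\<lambda>e f. psum (\<Delta> u) (\<lambda>a w. psum (\<Delta> w) (\<lambda>b h2. W a b h2 e f))))"
    by (rule psum_cong) (rule psum_swap2)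
  also have "\<dots> = psum (\<Delta> h) (\<lambda>g f. psum (\<Delta> g) (\<lambda>u e. psum (\<Delta> u) (\<lambda>a w. psum (\<Delta> w) (\<lambda>b h2. W a b h2 e f))))"
  proof -
    have t: "tri sc (\<lambda>u e f. psum (\<Delta> u) (\<lambda>a w. psum (\<Delta> w) (\<lambda>b h2. W a b h2 e f)))"
      by (intro linrules l1 l2 l3 l4 l5)
    show ?thesis by (rule coassoc[OF t, symmetric])
  qed
  also have "\<dots> = psum (\<Delta> h) (\<lambda>g f. psum (\<Delta> g) (\<lambda>a k. psum (\<Delta> k) (\<lambda>w e. psum (\<Delta> w) (\<lambda>b h2. W a b h2 e f))))"
  proof (rule psum_cong)
    fix g f
    have t: "tri sc (\<lambda>a w e. psum (\<Delta> w) (\<lambda>b h2. W a b h2 e f))"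
      by (intro linrules l1 l2 l3 l4 l5)
    show "psum (\<Delta> g) (\<lambda>u e. psum (\<Delta> u) (\<lambda>a w. psum (\<Delta> w) (\<lambda>b h2. W a b h2 e f)))
      = psum (\<Delta> g) (\<lambda>a k. psum (\<Delta> k) (\<lambda>w e. psum (\<Delta> w) (\<lambda>b h2. W a b h2 e f)))"
      by (rule coassoc[OF t])
  qed
  finally show ?thesis .
qed

end

locale sqtL =
  fixes sc :: "'k::field \<Rightarrow> 'h::ring_1 \<Rightarrow> 'h" and \<Delta> :: "'h \<Rightarrow> ('h \<times> 'h) list"
    and \<epsilon> :: "'h \<Rightarrow> 'k" and S :: "'h \<Rightarrow> 'h" and R :: "('h \<times> 'h) list"
  assumes SQ: "semiquasitriangular sc \<Delta> \<epsilon> S R"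
begin

sublocale hopfL sc \<Delta> \<epsilon> S
  using SQ by unfold_locales (simp add: semiquasitriangular_def)

lemma ax1: "tri sc \<tau> \<Longrightarrow> psum R (\<lambda>r1 r2. psum (\<Delta> r1) (\<lambda>x1 x2. \<tau> x1 x2 r2))
   = psum R (\<lambda>r1 r2. psum R (\<lambda>s1 s2. \<tau> r1 s1 (r2 * s2)))"
proof -
  assume t: "tri sc \<tau>"
  have "teq3 sc [(x1, x2, r2). (r1,r2) \<leftarrow> R, (x1,x2) \<leftarrow> \<Delta> r1]
             [(r1, s1, r2 * s2). (r1,r2) \<leftarrow> R, (s1,s2) \<leftarrow> R]"
    using SQ by (simp add: semiquasitriangular_def)
  from teq3_use[OF this t] show ?thesis
    unfolding psum_def by (simp add: split_def o_def sl_map_concat)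
qed

lemma ax5: "\<exists>ys. (\<forall>(a,z) \<in> set ys. z \<in> centre) \<and> teq2 sc (nu \<Delta> S R h) ys"
  using SQ by (simp add: semiquasitriangular_def)

lemma nu_sum: "psum (nu \<Delta> S R h) G = psum R (\<lambda>r1 r2. psum (\<Delta> h) (\<lambda>u h3. psum (\<Delta> u) (\<lambda>h1 h2.
   psum R (\<lambda>s1 s2. G (r2*h2*s2) (S h1 * S r1 * h3 * s1)))))"
  unfolding nu_def Delta3_def psum_def by (simp add: split_def o_def sl_map_concat)


lemma P1:
  assumes t: "tri sc \<tau>"
  shows "psum R (\<lambda>s1 s2. psum (\<Delta> (S h1 * S r1 * h3 * s1)) (\<lambda>z1 z2. \<tau> (r2*h2*s2) z1 z2))
   = psum (\<Delta> r1) (\<lambda>c d. psum (\<Delta> h1) (\<lambda>a b. psum (\<Delta> h3) (\<lambda>e f.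
       psum R (\<lambda>s1 s2. psum R (\<lambda>t1 t2. \<tau> (r2*h2*(s2*t2)) (S b*S d*e*s1) (S a*S c*f*t1))))))"
proof -
  note tA = lin_triA[OF t] and tB = lin_triB[OF t] and tC = lin_triC[OF t]
  define B where "B x y = psum R (\<lambda>s1 s2. psum R (\<lambda>t1 t2. \<tau> (r2*h2*(s2*t2)) (x*s1) (y*t1)))" for x y
  have bB: "bil sc B" unfolding B_def by (intro linrules tA tB tC)
  define X where "X = S h1 * S r1 * h3"
  define \<gamma> where "\<gamma> x y = psum (\<Delta> h3) (\<lambda>e f. B (x*e) (y*f))" for x y
  have bg: "bil sc \<gamma>" unfolding \<gamma>_def B_def by (intro linrules tA tB tC)
  have "psum R (\<lambda>s1 s2. psum (\<Delta> (S h1 * S r1 * h3 * s1)) (\<lambda>z1 z2. \<tau> (r2*h2*s2) z1 z2))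
      = psum R (\<lambda>s1 s2. psum (\<Delta> X) (\<lambda>x y. psum (\<Delta> s1) (\<lambda>u v. \<tau> (r2*h2*s2) (x*u) (y*v))))"
    unfolding X_def by (rule psum_cong) (rule dsum_mult, intro linrules tA tB tC)
  also have "\<dots> = psum (\<Delta> X) (\<lambda>x y. psum R (\<lambda>s1 s2. psum (\<Delta> s1) (\<lambda>u v. \<tau> (r2*h2*s2) (x*u) (y*v))))"
    by (rule psum_swap)
  also have "\<dots> = psum (\<Delta> X) B"
    unfolding B_def by (rule psum_cong) (rule ax1, intro linrules tA tB tC)
  also have "\<dots> = psum (\<Delta> (S h1 * S r1)) \<gamma>"
    unfolding X_def \<gamma>_def by (rule dsum_mult[OF bB])
  also have "\<dots> = psum (\<Delta> (S h1)) (\<lambda>a b. psum (\<Delta> (S r1)) (\<lambda>c d. \<gamma> (a*c) (b*d)))"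
    by (rule dsum_mult[OF bg])
  also have "\<dots> = psum (\<Delta> (S r1)) (\<lambda>c d. psum (\<Delta> (S h1)) (\<lambda>a b. \<gamma> (a*c) (b*d)))"
    by (rule psum_swap)
  also have "\<dots> = psum (\<Delta> r1) (\<lambda>c d. psum (\<Delta> (S h1)) (\<lambda>a b. \<gamma> (a*S d) (b*S c)))"
    by (rule antiS) (unfold \<gamma>_def B_def, intro linrules tA tB tC)
  also have "\<dots> = psum (\<Delta> r1) (\<lambda>c d. psum (\<Delta> h1) (\<lambda>a b. \<gamma> (S b*S d) (S a*S c)))"
    by (rule psum_cong) (rule antiS, unfold \<gamma>_def B_def, intro linrules tA tB tC)
  finally show ?thesis unfolding \<gamma>_def B_def by (simp add: mult.assoc)
qed


lemma swapDR: "psum (\<Delta> z) (\<lambda>x y. psum R (F x y)) = psum R (\<lambda>u v. psum (\<Delta> z) (\<lambda>x y. F x y u v))"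
  by (rule psum_swap)

lemma main_eq:
  assumes t: "tri sc \<tau>"
  shows "psum (nu \<Delta> S R h) (\<lambda>a z. psum (\<Delta> z) (\<lambda>z1 z2. \<tau> a z1 z2))
   = psum R (\<lambda>r1 r2. psum (\<Delta> h) (\<lambda>m y. psum (\<Delta> m) (\<lambda>x k. psum R (\<lambda>p1 p2.
       psum (nu \<Delta> S R k) (\<lambda>a z. \<tau> (r2*a*p2) z (S x*S r1*y*p1))))))"
proof -
  note tA = lin_triA[OF t] and tB = lin_triB[OF t] and tC = lin_triC[OF t]
  have "psum (nu \<Delta> S R h) (\<lambda>a z. psum (\<Delta> z) (\<lambda>z1 z2. \<tau> a z1 z2))
    = psum R (\<lambda>r1 r2. psum (\<Delta> h) (\<lambda>u h3. psum (\<Delta> u) (\<lambda>h1 h2.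
        psum R (\<lambda>s1 s2. psum (\<Delta> (S h1 * S r1 * h3 * s1)) (\<lambda>z1 z2. \<tau> (r2*h2*s2) z1 z2)))))"
    by (rule nu_sum)
  also have "\<dots> = psum R (\<lambda>r1 r2. psum (\<Delta> h) (\<lambda>u h3. psum (\<Delta> u) (\<lambda>h1 h2.
        psum (\<Delta> r1) (\<lambda>c d. psum (\<Delta> h1) (\<lambda>a b. psum (\<Delta> h3) (\<lambda>e f.
       psum R (\<lambda>s1 s2. psum R (\<lambda>t1 t2. \<tau> (r2*h2*(s2*t2)) (S b*S d*e*s1) (S a*S c*f*t1)))))))))"
    by (simp only: P1[OF t])
  also have "\<dots> = psum R (\<lambda>r1 r2. psum (\<Delta> r1) (\<lambda>c d. psum (\<Delta> h) (\<lambda>u h3. psum (\<Delta> u) (\<lambda>h1 h2.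
        psum (\<Delta> h1) (\<lambda>a b. psum (\<Delta> h3) (\<lambda>e f.
       psum R (\<lambda>s1 s2. psum R (\<lambda>t1 t2. \<tau> (r2*h2*(s2*t2)) (S b*S d*e*s1) (S a*S c*f*t1)))))))))"
    by (rule psum_cong) (rule psum_swap2)
  also have "\<dots> = psum R (\<lambda>r1 r2. psum R (\<lambda>q1 q2. psum (\<Delta> h) (\<lambda>u h3. psum (\<Delta> u) (\<lambda>h1 h2.
        psum (\<Delta> h1) (\<lambda>a b. psum (\<Delta> h3) (\<lambda>e f.
       psum R (\<lambda>s1 s2. psum R (\<lambda>t1 t2. \<tau> (r2*q2*h2*(s2*t2)) (S b*S q1*e*s1) (S a*S r1*f*t1)))))))))"
    by (rule ax1) (intro linrules tA tB tC)
  also have "\<dots> = psum R (\<lambda>r1 r2. psum R (\<lambda>q1 q2. psum (\<Delta> h) (\<lambda>m y. psum (\<Delta> m) (\<lambda>x k.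
        psum (\<Delta> k) (\<lambda>n k3. psum (\<Delta> n) (\<lambda>k1 k2.
       psum R (\<lambda>s1 s2. psum R (\<lambda>t1 t2. \<tau> (r2*q2*k2*(s2*t2)) (S k1*S q1*k3*s1) (S x*S r1*y*t1)))))))))"
    by (intro psum_cong coassoc5) (intro linrules tA tB tC)+
  also have "\<dots> = psum R (\<lambda>r1 r2. psum (\<Delta> h) (\<lambda>m y. psum (\<Delta> m) (\<lambda>x k. psum R (\<lambda>p1 p2.
       psum (nu \<Delta> S R k) (\<lambda>a z. \<tau> (r2*a*p2) z (S x*S r1*y*p1))))))"
    unfolding nu_sum
    by (simp only: swapDR mult.assoc) (rule psum_cong, rule psum_swap2)
  finally show ?thesis .
qed


lemma final: "\<exists>ys :: ('h \<times> 'h \<times> 'h) list. (\<forall>(a,z,b) \<in> set ys. z \<in> centre)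
           \<and> teq3 sc [(a, z1, z2). (a,z) \<leftarrow> nu \<Delta> S R h, (z1,z2) \<leftarrow> \<Delta> z] ys"
proof -
  have "\<forall>k. \<exists>ys. (\<forall>(a,z) \<in> set ys. z \<in> centre) \<and> teq2 sc (nu \<Delta> S R k) ys"
    using ax5 by blast
  then obtain YS where YS: "\<And>k. (\<forall>(a,z) \<in> set (YS k). z \<in> centre) \<and> teq2 sc (nu \<Delta> S R k) (YS k)"
    by metis
  define ys where "ys = [(r2*a*p2, z, S x * S r1 * y * p1).
     (r1,r2) \<leftarrow> R, (x,k,y) \<leftarrow> Delta3 \<Delta> h, (p1,p2) \<leftarrow> R, (a,z) \<leftarrow> YS k]"
  have c: "\<forall>(a,z,b) \<in> set ys. z \<in> centre"
    unfolding ys_def using YS by fastforce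
  have "teq3 sc [(a, z1, z2). (a,z) \<leftarrow> nu \<Delta> S R h, (z1,z2) \<leftarrow> \<Delta> z] ys"
    unfolding teq3_def
  proof (intro allI impI)
    fix \<tau> :: "'h \<Rightarrow> 'h \<Rightarrow> 'h \<Rightarrow> 'k"
    assume "trilin_form sc \<tau>"
    hence t: "tri sc \<tau>" using vs by (simp add: tri_iff)
    note tA = lin_triA[OF t] and tB = lin_triB[OF t] and tC = lin_triC[OF t]
    have "(\<Sum>(a, b, c)\<leftarrow>[(a, z1, z2). (a,z) \<leftarrow> nu \<Delta> S R h, (z1,z2) \<leftarrow> \<Delta> z]. \<tau> a b c)
       = psum (nu \<Delta> S R h) (\<lambda>a z. psum (\<Delta> z) (\<lambda>z1 z2. \<tau> a z1 z2))"
      unfolding psum_def by (simp add: split_def o_def sl_map_concat)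
    also have "\<dots> = psum R (\<lambda>r1 r2. psum (\<Delta> h) (\<lambda>m y. psum (\<Delta> m) (\<lambda>x k. psum R (\<lambda>p1 p2.
       psum (nu \<Delta> S R k) (\<lambda>a z. \<tau> (r2*a*p2) z (S x*S r1*y*p1))))))"
      by (rule main_eq[OF t])
    also have "\<dots> = psum R (\<lambda>r1 r2. psum (\<Delta> h) (\<lambda>m y. psum (\<Delta> m) (\<lambda>x k. psum R (\<lambda>p1 p2.
       psum (YS k) (\<lambda>a z. \<tau> (r2*a*p2) z (S x*S r1*y*p1))))))"
      by (intro psum_cong teq2_use[OF YS[THEN conjunct2]]) (intro linrules tA tB tC)
    also have "\<dots> = (\<Sum>(a, b, c)\<leftarrow>ys. \<tau> a b c)"
      unfolding ys_def Delta3_def psum_def by (simp add: split_def o_def sl_map_concat)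
    finally show "(\<Sum>(a, b, c)\<leftarrow>[(a, z1, z2). (a,z) \<leftarrow> nu \<Delta> S R h, (z1,z2) \<leftarrow> \<Delta> z]. \<tau> a b c)
       = (\<Sum>(a, b, c)\<leftarrow>ys. \<tau> a b c)" .
  qed
  with c show ?thesis by blast
qed

end

theorem lemma2p2:
  fixes sc :: "'k::field \<Rightarrow> 'h::ring_1 \<Rightarrow> 'h"
    and \<Delta> :: "'h \<Rightarrow> ('h \<times> 'h) list" and \<epsilon> :: "'h \<Rightarrow> 'k" and S :: "'h \<Rightarrow> 'h"
    and R :: "('h \<times> 'h) list" and h :: 'h
  assumes "semiquasitriangular sc \<Delta> \<epsilon> S R"
  shows "\<exists>ys :: ('h \<times> 'h \<times> 'h) list. (\<forall>(a,z,b) \<in> set ys. z \<in> centre)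
           \<and> teq3 sc [(a, z1, z2). (a,z) \<leftarrow> nu \<Delta> S R h, (z1,z2) \<leftarrow> \<Delta> z] ys"
  by (rule sqtL.final[OF sqtL.intro[OF assms]])

end
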